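(* Let $A$ be a profile and $k$ a committee size such that $|A_i|\le 2$ for all $i\in N_A$ and $|N_A(c)|=|N_A(d)|\le n/k$ for all $c,d\in C$. Then the method of equal shares (with Phase 2 as described) and sequential Phragmén select exactly the same sets of valid candidate sequences on $(A,k)$; in particular they return the same set of winning committees.
   Context: Candidates form a finite set $C$, $|C|=m>1$. An approval profile $A$ has a nonempty finite voter set $N_A$, each $i\in N_A$ having a nonempty ballot $A_i\subseteq C$; $N_A(c)=\{i\in N_A:c\in A_i\}$, $n=|N_A|$. Both rules add candidates one at a time and return all committees obtainable under some tie-breaking. Sequential Phragmén: every voter's budget starts at 0 and increases continuously at unit rate; as soon as the supporters $N_A(c)$ of some unchosen candidate $c$ have total budget 1, such a $c$ (any, in case of ties) is bought and its supporters' budgets are reset to 0; continue until $k$ candidates are bought. Method of equal shares: each voter starts with budget $x_0(i)=k/n$; every candidate costs 1. Phase 1: with budgets $x_r$ after buying $r$ candidates, let $C_r$ be the unchosen candidates $c$ with $\sum_{i\in N_A(c)}x_r(i)\ge1$; if $C_r\neq\emptyset$, buy any $c\in C_r$ minimizing $\rho(c)$, where $\sum_{i\in N_A(c)}\min(\rho(c),x_r(i))=1$, and set $x_{r+1}(i)=x_r(i)-\min(\rho(c),x_r(i))$ for $i\in N_A(c)$, $x_{r+1}(i)=x_r(i)$ otherwise; stop when $C_r=\emptyset$. Phase 2 (if fewer than $k$ bought): run the sequential Phragmén process above, but with voters starting from their remaining Phase 1 budgets instead of 0. *)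

theory Defs
  imports Main "HOL-Library.Multiset" Complex_Main
begin

text \<open>Approval profiles: a voter set N (of type 'v set), ballots A :: 'v => 'c set,
  candidate set C.  Budgets are functions 'v => real (values outside N are irrelevant).\<close>

definition supporters :: "'v set \<Rightarrow> ('v \<Rightarrow> 'c set) \<Rightarrow> 'c \<Rightarrow> 'v set" where
  "supporters N A c = {i \<in> N. c \<in> A i}"

text \<open>One step of the (continuous) sequential Phragmen process: from budgets b, with the
  candidates in W already bought, after waiting time t the candidate c is the first
  (possibly tied) unchosen candidate whose supporters reach total budget 1; then its
  supporters are reset to 0 and all other voters have gained t.\<close>
definition phr_step ::
  "'v set \<Rightarrow> ('v \<Rightarrow> 'c set) \<Rightarrow> 'c set \<Rightarrow> 'c list \<Rightarrow> ('v \<Rightarrow> real) \<Rightarrow> 'c \<Rightarrow> ('v \<Rightarrow> real) \<Rightarrow> bool" where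
  "phr_step N A C W b c b' \<longleftrightarrow>
     c \<in> C - set W \<and>
     (\<exists>t\<ge>0. (\<Sum>i\<in>supporters N A c. b i + t) \<ge> 1 \<and>
        (\<forall>d\<in>C - set W. \<forall>s. 0 \<le> s \<and> s < t \<longrightarrow> (\<Sum>i\<in>supporters N A d. b i + s) < 1) \<and>
        b' = (\<lambda>i. if i \<in> supporters N A c then 0 else b i + t))"

inductive phr_run ::
  "'v set \<Rightarrow> ('v \<Rightarrow> 'c set) \<Rightarrow> 'c set \<Rightarrow> ('v \<Rightarrow> real) \<Rightarrow> 'c list \<Rightarrow> 'c list \<Rightarrow> ('v \<Rightarrow> real) \<Rightarrow> bool"
  for N A C b0 W0 where
  phr_start: "phr_run N A C b0 W0 W0 b0"
| phr_next: "phr_run N A C b0 W0 W b \<Longrightarrow> phr_step N A C W b c b' \<Longrightarrow> phr_run N A C b0 W0 (W @ [c]) b'"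

definition phragmen_seqs :: "'v set \<Rightarrow> ('v \<Rightarrow> 'c set) \<Rightarrow> 'c set \<Rightarrow> nat \<Rightarrow> 'c list set" where
  "phragmen_seqs N A C k = {W. length W = k \<and> (\<exists>b. phr_run N A C (\<lambda>_. 0) [] W b)}"

definition mes_rho :: "('v \<Rightarrow> real) \<Rightarrow> 'v set \<Rightarrow> real" where
  "mes_rho x S = (LEAST \<rho>. (\<Sum>i\<in>S. min \<rho> (x i)) = 1)"

definition mes_affordable ::
  "'v set \<Rightarrow> ('v \<Rightarrow> 'c set) \<Rightarrow> 'c set \<Rightarrow> 'c list \<Rightarrow> ('v \<Rightarrow> real) \<Rightarrow> 'c set" where
  "mes_affordable N A C W x = {c \<in> C - set W. (\<Sum>i\<in>supporters N A c. x i) \<ge> 1}"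

definition mes_step ::
  "'v set \<Rightarrow> ('v \<Rightarrow> 'c set) \<Rightarrow> 'c set \<Rightarrow> 'c list \<Rightarrow> ('v \<Rightarrow> real) \<Rightarrow> 'c \<Rightarrow> ('v \<Rightarrow> real) \<Rightarrow> bool" where
  "mes_step N A C W x c x' \<longleftrightarrow>
     c \<in> mes_affordable N A C W x \<and>
     (\<forall>d\<in>mes_affordable N A C W x.
        mes_rho x (supporters N A c) \<le> mes_rho x (supporters N A d)) \<and>
     x' = (\<lambda>i. if i \<in> supporters N A c
               then x i - min (mes_rho x (supporters N A c)) (x i) else x i)"

inductive mes1_run ::
  "'v set \<Rightarrow> ('v \<Rightarrow> 'c set) \<Rightarrow> 'c set \<Rightarrow> nat \<Rightarrow> 'c list \<Rightarrow> ('v \<Rightarrow> real) \<Rightarrow> bool"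
  for N A C k where
  mes1_start: "mes1_run N A C k [] (\<lambda>_. real k / real (card N))"
| mes1_next: "mes1_run N A C k W x \<Longrightarrow> mes_step N A C W x c x' \<Longrightarrow> mes1_run N A C k (W @ [c]) x'"

text \<open>Valid candidate sequences of the method of equal shares (Phase 1 until no candidate
  is affordable, then Phase 2 = Phragmen from the remaining budgets until k are bought).\<close>
definition mes_seqs :: "'v set \<Rightarrow> ('v \<Rightarrow> 'c set) \<Rightarrow> 'c set \<Rightarrow> nat \<Rightarrow> 'c list set" where
  "mes_seqs N A C k = {W. length W = k \<and>
     (\<exists>W1 x b. mes1_run N A C k W1 x \<and> mes_affordable N A C W1 x = {} \<and>
               phr_run N A C x W1 W b)}"

end

theory Submission imports Defs begin

lemma phr_run_prefix: "phr_run N A C b0 W0 W b \<Longrightarrow> \<exists>ys. W = W0 @ ys"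
  by (induction rule: phr_run.induct) auto

lemma phr_run_trans: "phr_run N A C x W1 W b \<Longrightarrow> phr_run N A C b0 W0 W1 x \<Longrightarrow> phr_run N A C b0 W0 W b"
  by (induction rule: phr_run.induct) (auto intro: phr_run.intros)

lemma phr_run_front: "phr_run N A C b0 W0 W b \<Longrightarrow>
   (W = W0 \<and> b = b0) \<or> (\<exists>c b1. phr_step N A C W0 b0 c b1 \<and> phr_run N A C b1 (W0@[c]) W b)"
proof (induction rule: phr_run.induct)
  case phr_start then show ?case by simp
next
  case (phr_next W b c b')
  from phr_next.IH show ?case
  proof
    assume "W = W0 \<and> b = b0"
    then show ?thesis using phr_next.hyps(2) by (auto intro: phr_run.intros)
  next
    assume "\<exists>c b1. phr_step N A C W0 b0 c b1 \<and> phr_run N A C b1 (W0@[c]) W b"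
    then show ?thesis using phr_next.hyps(2) by (auto intro: phr_run.intros)
  qed
qed

lemma phr_run_cons: "phr_step N A C W0 b0 c b1 \<Longrightarrow> phr_run N A C b1 (W0@[c]) W b \<Longrightarrow> phr_run N A C b0 W0 W b"
proof -
  assume a: "phr_step N A C W0 b0 c b1" and r: "phr_run N A C b1 (W0@[c]) W b"
  have "phr_run N A C b0 W0 (W0@[c]) b1" using a by (auto intro: phr_run.intros)
  with r show ?thesis by (rule phr_run_trans)
qed

definition UW :: "'v set \<Rightarrow> ('v \<Rightarrow> 'c set) \<Rightarrow> 'c list \<Rightarrow> 'v set" where
  "UW N A W = \<Union> (supporters N A ` set W)"

definition Inv :: "'v set \<Rightarrow> ('v \<Rightarrow> 'c set) \<Rightarrow> 'c set \<Rightarrow> real \<Rightarrow> 'c list \<Rightarrow> ('v \<Rightarrow> real) \<Rightarrow> bool" where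
  "Inv N A C u W x \<longleftrightarrow> distinct W \<and> set W \<subseteq> C \<and>
     (\<forall>c\<in>set W. \<forall>d\<in>set W. c \<noteq> d \<longrightarrow> supporters N A c \<inter> supporters N A d = {}) \<and>
     x = (\<lambda>i. if i \<in> UW N A W then 0 else u)"

locale mesctx =
  fixes N :: "'v set" and A :: "'v \<Rightarrow> 'c set" and C :: "'c set" and s :: nat and u :: real
  assumes finN: "finite N" and cardS: "\<forall>c\<in>C. card (supporters N A c) = s"
    and s1: "s \<ge> 1" and u_def: "u = 1 / real s"
begin

lemma finS: "finite (supporters N A c)"
  using finN by (auto simp: supporters_def)

lemma sumS: "c \<in> C \<Longrightarrow> (\<Sum>i\<in>supporters N A c. a) = real s * a"
  using cardS by simp

lemma cardS': "c \<in> C \<Longrightarrow> card (supporters N A c) = s" using cardS by simp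

lemma su: "real s * u = 1" using s1 u_def by simp

lemma u_pos: "u > 0" using s1 u_def by simp

lemma phr_step_const:
  assumes "0 \<le> c0" "c0 \<le> u"
  shows "phr_step N A C [] (\<lambda>_. c0) c b' \<longleftrightarrow> c \<in> C \<and> b' = (\<lambda>i. if i \<in> supporters N A c then 0 else u)"
proof
  assume h: "phr_step N A C [] (\<lambda>_. c0) c b'"
  then have cC: "c \<in> C" by (simp add: phr_step_def)
  from h obtain t where t0: "t \<ge> 0" and t1: "(\<Sum>i\<in>supporters N A c. c0 + t) \<ge> 1"
    and t2: "\<forall>d\<in>C. \<forall>s'. 0 \<le> s' \<and> s' < t \<longrightarrow> (\<Sum>i\<in>supporters N A d. c0 + s') < 1"
    and b: "b' = (\<lambda>i. if i \<in> supporters N A c then 0 else c0 + t)"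
    by (auto simp: phr_step_def)
  have t1': "real s * (c0 + t) \<ge> 1" using t1 sumS[OF cC] by metis
  have t2': "\<And>s'. 0 \<le> s' \<Longrightarrow> s' < t \<Longrightarrow> real s * (c0 + s') < 1"
  proof -
    fix s' :: real assume "0 \<le> s'" "s' < t"
    then have "(\<Sum>i\<in>supporters N A c. c0 + s') < 1" using t2 cC by blast
    then show "real s * (c0 + s') < 1" using sumS[OF cC] by metis
  qed
  have "c0 + t = u"
  proof (rule ccontr)
    assume ne: "c0 + t \<noteq> u"
    show False
    proof (cases "c0 + t < u")
      case True
      then have "real s * (c0 + t) < real s * u" using s1 by simp
      then show False using t1' su by simp
    next
      case False
      then have "u - c0 < t" using ne by simp
      from t2'[OF _ this] assms su show False by simp
    qed
  qed
  then show "c \<in> C \<and> b' = (\<lambda>i. if i \<in> supporters N A c then 0 else u)" using cC b by metis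
next
  assume h: "c \<in> C \<and> b' = (\<lambda>i. if i \<in> supporters N A c then 0 else u)"
  show "phr_step N A C [] (\<lambda>_. c0) c b'"
    unfolding phr_step_def
  proof (intro conjI exI[of _ "u - c0"])
    show "c \<in> C - set []" using h by simp
    show "0 \<le> u - c0" using assms by simp
    show "1 \<le> (\<Sum>i\<in>supporters N A c. c0 + (u - c0))" using h cardS' su by simp
    show "\<forall>d\<in>C - set []. \<forall>s'. 0 \<le> s' \<and> s' < u - c0 \<longrightarrow> (\<Sum>i\<in>supporters N A d. c0 + s') < 1"
    proof (intro ballI allI impI)
      fix d s' assume d: "d \<in> C - set []" and "0 \<le> s' \<and> s' < u - c0"
      then have "c0 + s' < u" by simp
      then have "real s * (c0 + s') < real s * u" using s1 by simp
      then show "(\<Sum>i\<in>supporters N A d. c0 + s') < 1" using cardS' d su by simp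
    qed
    show "b' = (\<lambda>i. if i \<in> supporters N A c then 0 else c0 + (u - c0))" using h by auto
  qed
qed

lemma conv:
  assumes "0 \<le> c0" "c0 \<le> u" "0 \<le> c1" "c1 \<le> u"
    and "phr_run N A C (\<lambda>_. c0) [] W b" "W \<noteq> []"
  shows "phr_run N A C (\<lambda>_. c1) [] W b"
proof -
  from phr_run_front[OF assms(5)] assms(6) obtain c b1 where
    st: "phr_step N A C [] (\<lambda>_. c0) c b1" and r: "phr_run N A C b1 ([]@[c]) W b" by auto
  have "phr_step N A C [] (\<lambda>_. c1) c b1"
    using st phr_step_const[OF assms(1,2)] phr_step_const[OF assms(3,4)] by simp
  then show ?thesis using r phr_run_cons[of N A C "[]" "\<lambda>_. c1" c b1 W b] by simp
qed

lemma UW_sub: "UW N A W \<subseteq> N" by (auto simp: UW_def supporters_def)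

lemma aff_disj:
  assumes inv: "Inv N A C u W x" and cC: "c \<in> C" and ge: "(\<Sum>i\<in>supporters N A c. x i) \<ge> 1"
  shows "supporters N A c \<inter> UW N A W = {}"
proof (rule ccontr)
  assume "supporters N A c \<inter> UW N A W \<noteq> {}"
  then obtain i where i: "i \<in> supporters N A c" "i \<in> UW N A W" by blast
  have xi: "x i = 0" using inv i by (simp add: Inv_def)
  have le: "\<And>j. x j \<le> u" using inv u_pos by (simp add: Inv_def)
  have "(\<Sum>j\<in>supporters N A c. x j) = x i + (\<Sum>j\<in>supporters N A c - {i}. x j)"
    by (rule sum.remove[OF finS i(1)])
  also have "(\<Sum>j\<in>supporters N A c - {i}. x j) \<le> real (card (supporters N A c - {i})) * u"
    by (rule sum_bounded_above) (use le in auto)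
  also have "card (supporters N A c - {i}) = s - 1" using cardS'[OF cC] i(1) finS by simp
  also have "real (s - 1) * u = real s * u - u" using s1 by (simp add: of_nat_diff algebra_simps)
  finally have "(\<Sum>j\<in>supporters N A c. x j) \<le> 1 - u" using xi su by simp
  then show False using ge u_pos by simp
qed

lemma aff_all_u:
  assumes inv: "Inv N A C u W x" and cC: "c \<in> C" and ge: "(\<Sum>i\<in>supporters N A c. x i) \<ge> 1"
  shows "\<forall>i\<in>supporters N A c. x i = u"
  using aff_disj[OF assms] inv by (auto simp: Inv_def)

lemma rho_u:
  assumes all: "\<forall>i\<in>supporters N A c. x i = u" and cC: "c \<in> C"
  shows "mes_rho x (supporters N A c) = u"
proof -
  have eq: "\<And>r. (\<Sum>i\<in>supporters N A c. min r (x i)) = real s * min r u"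
  proof -
    fix r
    have "(\<Sum>i\<in>supporters N A c. min r (x i)) = (\<Sum>i\<in>supporters N A c. min r u)"
      using all by (intro sum.cong) auto
    then show "(\<Sum>i\<in>supporters N A c. min r (x i)) = real s * min r u" using cardS'[OF cC] by simp
  qed
  show ?thesis unfolding mes_rho_def eq
  proof (rule Least_equality)
    show "real s * min u u = 1" using su by simp
    fix y assume h: "real s * min y u = 1"
    show "u \<le> y"
    proof (rule ccontr)
      assume "\<not> u \<le> y"
      then have "min y u = y" "y < u" by auto
      then have "real s * min y u < real s * u" using s1 by simp
      then show False using h su by simp
    qed
  qed
qed

lemma mes_step_inv:
  assumes inv: "Inv N A C u W x" and st: "mes_step N A C W x c x'"
  shows "Inv N A C u (W@[c]) x' \<and> phr_step N A C W x c x'"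
proof -
  have cC: "c \<in> C" and cW: "c \<notin> set W" and ge: "(\<Sum>i\<in>supporters N A c. x i) \<ge> 1"
    using st by (auto simp: mes_step_def mes_affordable_def)
  have disj: "supporters N A c \<inter> UW N A W = {}" by (rule aff_disj[OF inv cC ge])
  have allu: "\<forall>i\<in>supporters N A c. x i = u" by (rule aff_all_u[OF inv cC ge])
  have rho: "mes_rho x (supporters N A c) = u" by (rule rho_u[OF allu cC])
  have x': "x' = (\<lambda>i. if i \<in> supporters N A c then 0 else x i)"
    using st rho allu by (auto simp: mes_step_def)
  have i1: "Inv N A C u (W@[c]) x'"
    unfolding Inv_def
  proof (intro conjI)
    show "distinct (W @ [c])" using inv cW by (simp add: Inv_def)
    show "set (W @ [c]) \<subseteq> C" using inv cC by (simp add: Inv_def)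
    show "\<forall>a\<in>set (W @ [c]). \<forall>d\<in>set (W @ [c]). a \<noteq> d \<longrightarrow> supporters N A a \<inter> supporters N A d = {}"
      using inv disj by (auto simp: Inv_def UW_def)
    show "x' = (\<lambda>i. if i \<in> UW N A (W @ [c]) then 0 else u)"
      using inv x' by (auto simp: Inv_def UW_def)
  qed
  have "phr_step N A C W x c x'"
    unfolding phr_step_def
  proof (intro conjI exI[of _ 0])
    show "c \<in> C - set W" using cC cW by simp
  qed (use ge x' in auto)
  with i1 show ?thesis by simp
qed

lemma phr_step_mes:
  assumes inv: "Inv N A C u W x" and d: "d \<in> mes_affordable N A C W x"
    and st: "phr_step N A C W x c b1"
  shows "mes_step N A C W x c b1"
proof -
  from st obtain t where cCW: "c \<in> C - set W" and t0: "t \<ge> 0"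
    and t1: "(\<Sum>i\<in>supporters N A c. x i + t) \<ge> 1"
    and t2: "\<forall>d\<in>C - set W. \<forall>s'. 0 \<le> s' \<and> s' < t \<longrightarrow> (\<Sum>i\<in>supporters N A d. x i + s') < 1"
    and b: "b1 = (\<lambda>i. if i \<in> supporters N A c then 0 else x i + t)"
    by (auto simp: phr_step_def)
  have dC: "d \<in> C - set W" and dge: "(\<Sum>i\<in>supporters N A d. x i) \<ge> 1"
    using d by (auto simp: mes_affordable_def)
  have "t = 0"
  proof (rule ccontr)
    assume "t \<noteq> 0"
    then have "0 < t" using t0 by simp
    then have "(\<Sum>i\<in>supporters N A d. x i + 0) < 1" using t2 dC by blast
    then show False using dge by simp
  qed
  then have cge: "(\<Sum>i\<in>supporters N A c. x i) \<ge> 1" and b': "b1 = (\<lambda>i. if i \<in> supporters N A c then 0 else x i)"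
    using t1 b by auto
  have cC: "c \<in> C" using cCW by simp
  have allu: "\<forall>i\<in>supporters N A c. x i = u" by (rule aff_all_u[OF inv cC cge])
  have rho: "mes_rho x (supporters N A c) = u" by (rule rho_u[OF allu cC])
  have rhoall: "\<forall>e\<in>mes_affordable N A C W x. mes_rho x (supporters N A e) = u"
  proof
    fix e assume e: "e \<in> mes_affordable N A C W x"
    then have eC: "e \<in> C" and ege: "(\<Sum>i\<in>supporters N A e. x i) \<ge> 1"
      by (auto simp: mes_affordable_def)
    show "mes_rho x (supporters N A e) = u" by (rule rho_u[OF aff_all_u[OF inv eC ege] eC])
  qed
  show ?thesis unfolding mes_step_def
  proof (intro conjI)
    show "c \<in> mes_affordable N A C W x" using cCW cge by (simp add: mes_affordable_def)
    show "\<forall>e\<in>mes_affordable N A C W x. mes_rho x (supporters N A c) \<le> mes_rho x (supporters N A e)"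
      using rhoall rho by simp
    show "b1 = (\<lambda>i. if i \<in> supporters N A c then x i - min (mes_rho x (supporters N A c)) (x i) else x i)"
      using b' rho allu by auto
  qed
qed

lemma full:
  assumes inv: "Inv N A C u W x" and len: "length W = k" and cN: "card N = k * s"
  shows "mes_affordable N A C W x = {}"
proof (rule ccontr)
  assume "mes_affordable N A C W x \<noteq> {}"
  then obtain d where dC: "d \<in> C" and dge: "(\<Sum>i\<in>supporters N A d. x i) \<ge> 1"
    by (auto simp: mes_affordable_def)
  have disj: "supporters N A d \<inter> UW N A W = {}" by (rule aff_disj[OF inv dC dge])
  have "card (UW N A W) = (\<Sum>c\<in>set W. card (supporters N A c))"
    unfolding UW_def using inv finS by (intro card_UN_disjoint) (auto simp: Inv_def)
  also have "\<dots> = (\<Sum>c\<in>set W. s)" using inv cardS by (intro sum.cong) (auto simp: Inv_def)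
  also have "\<dots> = length W * s" using inv by (simp add: Inv_def distinct_card)
  finally have "card (UW N A W) = card N" using len cN by simp
  then have "UW N A W = N" using UW_sub finN by (simp add: card_subset_eq)
  moreover have "supporters N A d \<subseteq> N" by (auto simp: supporters_def)
  moreover have "supporters N A d \<noteq> {}" using cardS'[OF dC] s1 by auto
  ultimately show False using disj by blast
qed

lemma mes_to_phr:
  assumes ku: "real k / real (card N) = u"
  shows "mes1_run N A C k W x \<Longrightarrow> Inv N A C u W x \<and> phr_run N A C (\<lambda>_. u) [] W x"
proof (induction rule: mes1_run.induct)
  case mes1_start
  then show ?case using ku by (auto simp: Inv_def UW_def intro: phr_run.intros)
next
  case (mes1_next W x c x')
  then show ?case using mes_step_inv by (blast intro: phr_run.intros)
qed

lemma P_aux: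
  assumes ku: "real k / real (card N) = u" and cN: "card N = k * s"
  shows "length W - length W1 = m \<Longrightarrow> phr_run N A C x W1 W b \<Longrightarrow> length W = k \<Longrightarrow> mes1_run N A C k W1 x \<Longrightarrow>
    \<exists>W1' x'. mes1_run N A C k W1' x' \<and> mes_affordable N A C W1' x' = {} \<and> phr_run N A C x' W1' W b"
proof (induction m arbitrary: W1 x rule: less_induct)
  case (less m)
  have inv: "Inv N A C u W1 x" using mes_to_phr[OF ku less.prems(4)] by simp
  show ?case
  proof (cases "mes_affordable N A C W1 x = {}")
    case True
    then show ?thesis using less.prems by blast
  next
    case False
    then obtain d where d: "d \<in> mes_affordable N A C W1 x" by blast
    from phr_run_front[OF less.prems(2)] show ?thesis
    proof
      assume "W = W1 \<and> b = x"
      then have "length W1 = k" using less.prems by simp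
      then show ?thesis using full[OF inv _ cN] False by simp
    next
      assume "\<exists>c b1. phr_step N A C W1 x c b1 \<and> phr_run N A C b1 (W1@[c]) W b"
      then obtain c b1 where st: "phr_step N A C W1 x c b1" and r: "phr_run N A C b1 (W1@[c]) W b" by blast
      have ms: "mes_step N A C W1 x c b1" by (rule phr_step_mes[OF inv d st])
      have mr: "mes1_run N A C k (W1@[c]) b1" using less.prems(4) ms by (rule mes1_run.mes1_next)
      obtain ys where "W = (W1@[c]) @ ys" using phr_run_prefix[OF r] by blast
      then have lt: "length W - length (W1@[c]) < m" using less.prems(1) by simp
      show ?thesis by (rule less.IH[OF lt refl r less.prems(3) mr])
    qed
  qed
qed

end

lemma case1_mes:
  assumes "\<forall>c\<in>C. (\<Sum>i\<in>supporters N A c. real k / real (card N)) < 1"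
  shows "mes1_run N A C k W x \<Longrightarrow> W = [] \<and> x = (\<lambda>_. real k / real (card N))"
proof (induction rule: mes1_run.induct)
  case mes1_start then show ?case by simp
next
  case (mes1_next W x c x')
  then show ?case using assms by (auto simp: mes_step_def mes_affordable_def)
qed

theorem mainTheorem6:
  fixes N :: "'v set" and A :: "'v \<Rightarrow> 'c set" and C :: "'c set" and k :: nat
  assumes "finite C" and "card C > 1"
    and "finite N" and "N \<noteq> {}"
    and "\<forall>i\<in>N. A i \<noteq> {} \<and> A i \<subseteq> C"
    and "\<forall>i\<in>N. card (A i) \<le> 2"
    and "\<forall>c\<in>C. \<forall>d\<in>C. card (supporters N A c) = card (supporters N A d)
                     \<and> real (card (supporters N A c)) \<le> real (card N) / real k"
  shows "mes_seqs N A C k = phragmen_seqs N A C k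
         \<and> set ` mes_seqs N A C k = set ` phragmen_seqs N A C k"
proof -
  obtain i where iN: "i \<in> N" using assms(4) by blast
  then obtain c0 where c0: "c0 \<in> A i" "c0 \<in> C" using assms(5) by blast
  define s where "s = card (supporters N A c0)"
  have finS0: "finite (supporters N A c0)" using assms(3) by (auto simp: supporters_def)
  have "i \<in> supporters N A c0" using iN c0 by (simp add: supporters_def)
  then have s1: "s \<ge> 1" using finS0 s_def by (metis One_nat_def Suc_leI card_gt_0_iff empty_iff)
  have cardS: "\<forall>c\<in>C. card (supporters N A c) = s" using assms(7) c0 s_def by metis
  have hs: "real s \<le> real (card N) / real k" using assms(7) c0 s_def by metis
  have n0: "card N > 0" using assms(3,4) by (simp add: card_gt_0_iff)
  have k0: "k \<noteq> 0"
  proof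
    assume "k = 0" then have "real s \<le> 0" using hs by simp
    then show False using s1 by simp
  qed
  have "real s * real k \<le> real (card N)" using hs k0 by (simp add: field_simps)
  then have skn: "s * k \<le> card N" by (metis of_nat_le_iff of_nat_mult)
  interpret mesctx N A C s "1 / real s"
    by unfold_locales (use assms(3) cardS s1 in auto)
  define x0 where "x0 = (\<lambda>_::'v. real k / real (card N))"
  have x0a: "0 \<le> real k / real (card N)" by simp
  have x0b: "real k / real (card N) \<le> 1 / real s"
    using skn n0 s1 by (simp add: field_simps) (metis of_nat_le_iff of_nat_mult mult.commute)
  have eq: "mes_seqs N A C k = phragmen_seqs N A C k"
  proof (cases "s * k = card N")
    case False
    then have lt: "s * k < card N" using skn by simp
    have "real s * (real k / real (card N)) < 1"
    proof -
      have "real (s * k) < real (card N)" using lt by (metis of_nat_less_iff)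
      then show ?thesis using n0 by (simp add: field_simps)
    qed
    then have aff: "\<forall>c\<in>C. (\<Sum>i\<in>supporters N A c. real k / real (card N)) < 1"
      using cardS by simp
    show ?thesis
    proof (intro set_eqI iffI)
      fix W assume "W \<in> mes_seqs N A C k"
      then obtain W1 x b where len: "length W = k" and m: "mes1_run N A C k W1 x"
        and r: "phr_run N A C x W1 W b" by (auto simp: mes_seqs_def)
      from case1_mes[OF aff m] r have "phr_run N A C (\<lambda>_. real k / real (card N)) [] W b" by simp
      then have "phr_run N A C (\<lambda>_. 0) [] W b"
        using conv[OF x0a x0b, of 0] len k0 by auto
      then show "W \<in> phragmen_seqs N A C k" using len by (auto simp: phragmen_seqs_def)
    next
      fix W assume "W \<in> phragmen_seqs N A C k"
      then obtain b where len: "length W = k" and r: "phr_run N A C (\<lambda>_. 0) [] W b"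
        by (auto simp: phragmen_seqs_def)
      have r': "phr_run N A C (\<lambda>_. real k / real (card N)) [] W b"
        using conv[OF _ _ x0a x0b, of 0] r len k0 by auto
      have "mes_affordable N A C [] (\<lambda>_. real k / real (card N)) = {}"
        using aff by (auto simp: mes_affordable_def)
      then show "W \<in> mes_seqs N A C k" unfolding mes_seqs_def
        using len r' mes1_run.mes1_start[of N A C k] by blast
    qed
  next
    case True
    have cN: "card N = k * s" using True by (simp add: mult.commute)
    have ku: "real k / real (card N) = 1 / real s"
      using cN n0 s1 k0 by (simp add: field_simps)
    have u0: "0 \<le> 1 / real s" by simp
    show ?thesis
    proof (intro set_eqI iffI)
      fix W assume "W \<in> mes_seqs N A C k"
      then obtain W1 x b where len: "length W = k" and m: "mes1_run N A C k W1 x"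
        and r: "phr_run N A C x W1 W b" by (auto simp: mes_seqs_def)
      have "phr_run N A C (\<lambda>_. 1 / real s) [] W1 x" using mes_to_phr[OF ku m] by simp
      with r have "phr_run N A C (\<lambda>_. 1 / real s) [] W b" by (rule phr_run_trans)
      then have "phr_run N A C (\<lambda>_. 0) [] W b"
        using conv[OF u0 order_refl, of 0] len k0 by auto
      then show "W \<in> phragmen_seqs N A C k" using len by (auto simp: phragmen_seqs_def)
    next
      fix W assume "W \<in> phragmen_seqs N A C k"
      then obtain b where len: "length W = k" and r: "phr_run N A C (\<lambda>_. 0) [] W b"
        by (auto simp: phragmen_seqs_def)
      have r': "phr_run N A C (\<lambda>_. real k / real (card N)) [] W b"
        using conv[OF _ _ x0a x0b, of 0] r len k0 by auto
      from P_aux[OF ku cN refl r' len mes1_run.mes1_start]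
      show "W \<in> mes_seqs N A C k" using len by (auto simp: mes_seqs_def)
    qed
  qed
  then show ?thesis by simp
qed

end
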